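(* Fix $f\in\mathbb{N}$ and $\ell=2f+1$. Consider a family of directed graphs $G=(V,E)$ with $n=|V|\to\infty$, and for each $G$ the reinforcement $G'=(V',E')$, $P$, $A'$ with $V'=V\times[\ell]$, $P(v_i)=v$, $E'=\{(v',w') : (P(v'),P(w'))\in E\}$, and $A'$ defined from $A$ by: every non-faulty $v'$ initializes copies of the state variables of $P(v')$ in $A$, sends on each $(v',w')\in E'$ the message $P(v')$ would send on $(P(v'),P(w'))$ under $A$, and updates its state as if $P(v')$ received from each in-neighbor $w$ the message sent to $v'$ by at least $f+1$ of the copies $w'$ of $w$. Let $F'\subseteq V'$ contain each node independently with probability $p=p(n)$ (Byzantine faults), and assume $p\in o(1)$. (a) If $p\in o(n^{-1/(f+1)})$, then with probability $1-o(1)$, for every $v\in V$ at most $f$ of its copies $v_1,\dots,v_\ell$ are in $F'$; consequently, with probability $1-o(1)$, $A'$ strongly simulates $A$ (every non-faulty $v'$ computes in every round the state of $P(v')$ in the fault-free execution of $A$), i.e., the reinforcement is valid under $\mathrm{Byz}(p)$. (b) If $G$ contains $\Omega(n)$ nodes with non-zero outdegree and $p\in\omega(n^{-1/(f+1)})$, then with probability $1-o(1)$ there is a node $v$ with non-zero outdegree having more than $f$ copies in $F'$; in particular, the reinforcement is not valid (for a scheduling algorithm $A$ and inputs under which $v$ sends a message over an outgoing edge, the simulation fails if the faulty copies send nothing).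
   Context: Networks are synchronous directed graphs; in each round each node sends messages on outgoing links determined by its state and updates its state from received messages and environment input, according to a scheduling algorithm $A$. $\mathrm{Byz}(p)$: each node of $V'$ is independently faulty with probability $p$, and faulty nodes behave arbitrarily. A reinforcement $(G',P,A')$ is valid (strong) under $\mathrm{Byz}(p)$ if $A'$ is a (strong) simulation of $A$ with probability $1-o(1)$ as $n\to\infty$, where strong simulation means every non-faulty $v'\in V'$ computes in every round the state of $P(v')$ in the fault-free execution of $A$ on $G$ (given that each non-faulty $v'$ receives the same environment input as $P(v')$). Asymptotic notation is with respect to $n\to\infty$ with $f$ fixed. *)

theory Defs
  imports "HOL-Probability.Probability" "HOL-Library.Landau_Symbols"
begin

text \<open>A synchronous scheduling algorithm on a network whose nodes have type 'v:
  initial state of each node, the message (or none) a node in a given state sends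
  on an outgoing link to a given node, and the state update from the current
  state, the environment input and the received messages (indexed by sender).\<close>
record ('v, 's, 'm, 'i) alg =
  alg_init  :: "'v \<Rightarrow> 's"
  alg_send  :: "'v \<Rightarrow> 's \<Rightarrow> 'v \<Rightarrow> 'm option"
  alg_trans :: "'v \<Rightarrow> 's \<Rightarrow> 'i \<Rightarrow> ('v \<Rightarrow> 'm option) \<Rightarrow> 's"

definition digraph :: "'v set \<Rightarrow> ('v \<times> 'v) set \<Rightarrow> bool" where
  "digraph V E \<longleftrightarrow> finite V \<and> E \<subseteq> V \<times> V \<and> (\<forall>v. (v, v) \<notin> E)"

fun exec :: "('v \<times> 'v) set \<Rightarrow> ('v, 's, 'm, 'i) alg \<Rightarrow> (nat \<Rightarrow> 'v \<Rightarrow> 'i) \<Rightarrow> nat \<Rightarrow> 'v \<Rightarrow> 's" where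
  "exec E A inp 0 = alg_init A"
| "exec E A inp (Suc r) = (\<lambda>v. alg_trans A v (exec E A inp r v) (inp r v)
      (\<lambda>w. if (w, v) \<in> E then alg_send A w (exec E A inp r w) v else None))"

text \<open>Copies: V' = V x [l] with l = 2f+1, P = fst, E' = pairs of copies of edges.\<close>
definition reinf_nodes :: "'v set \<Rightarrow> nat \<Rightarrow> ('v \<times> nat) set" where
  "reinf_nodes V f = V \<times> {..<2 * f + 1}"

definition reinf_edges :: "('v \<times> 'v) set \<Rightarrow> nat \<Rightarrow> (('v \<times> nat) \<times> ('v \<times> nat)) set" where
  "reinf_edges E f = {(x, y). (fst x, fst y) \<in> E \<and> snd x < 2 * f + 1 \<and> snd y < 2 * f + 1}"

definition vote :: "nat \<Rightarrow> (nat \<Rightarrow> 'm option) \<Rightarrow> 'm option" where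
  "vote f g = (if \<exists>m. f + 1 \<le> card {i. i < 2 * f + 1 \<and> g i = Some m}
               then Some (THE m. f + 1 \<le> card {i. i < 2 * f + 1 \<and> g i = Some m})
               else None)"

text \<open>Execution of the reinforced algorithm A' on G' with faulty set F; adv r x y is the
  (arbitrary) message a faulty node x sends to y in round r.  States of faulty nodes are irrelevant.\<close>
fun rexec :: "nat \<Rightarrow> ('v \<times> 'v) set \<Rightarrow> ('v, 's, 'm, 'i) alg \<Rightarrow> ('v \<times> nat) set
      \<Rightarrow> (nat \<Rightarrow> 'v \<times> nat \<Rightarrow> 'v \<times> nat \<Rightarrow> 'm option) \<Rightarrow> (nat \<Rightarrow> 'v \<Rightarrow> 'i)
      \<Rightarrow> nat \<Rightarrow> 'v \<times> nat \<Rightarrow> 's" where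
  "rexec f E A F adv inp 0 = (\<lambda>x. alg_init A (fst x))"
| "rexec f E A F adv inp (Suc r) = (\<lambda>y. alg_trans A (fst y) (rexec f E A F adv inp r y)
      (inp r (fst y))
      (\<lambda>w. if (w, fst y) \<in> E then
             vote f (\<lambda>i. if (w, i) \<in> F then adv r (w, i) y
                         else alg_send A w (rexec f E A F adv inp r (w, i)) (fst y))
           else None))"

definition strong_sim :: "nat \<Rightarrow> 'v set \<Rightarrow> ('v \<times> 'v) set \<Rightarrow> ('v, 's, 'm, 'i) alg \<Rightarrow> ('v \<times> nat) set
      \<Rightarrow> (nat \<Rightarrow> 'v \<times> nat \<Rightarrow> 'v \<times> nat \<Rightarrow> 'm option) \<Rightarrow> (nat \<Rightarrow> 'v \<Rightarrow> 'i) \<Rightarrow> bool" where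
  "strong_sim f V E A F adv inp \<longleftrightarrow>
     (\<forall>r. \<forall>x \<in> reinf_nodes V f - F. rexec f E A F adv inp r x = exec E A inp r (fst x))"

text \<open>Byz(p): each node of V' independently faulty with probability p
  (faulty set = {x. X x}).\<close>
definition fault_pmf :: "'v set \<Rightarrow> nat \<Rightarrow> real \<Rightarrow> ('v \<times> nat \<Rightarrow> bool) pmf" where
  "fault_pmf V f p = Pi_pmf (reinf_nodes V f) False (\<lambda>_. bernoulli_pmf p)"

end

theory Submission
  imports Defs
begin


lemma vote_correct:
  assumes bad: "card {i. i < 2 * f + 1 \<and> \<not> good i} \<le> f"
    and eq: "\<And>i. i < 2 * f + 1 \<Longrightarrow> good i \<Longrightarrow> g i = M"
  shows "vote f g = M"
proof -
  let ?L = "{..<2 * f + 1}"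
  define Gd where "Gd = {i. i < 2 * f + 1 \<and> good i}"
  define Bd where "Bd = {i. i < 2 * f + 1 \<and> \<not> good i}"
  have "Gd \<union> Bd = ?L" "Gd \<inter> Bd = {}" by (auto simp: Gd_def Bd_def)
  hence "card Gd + card Bd = 2 * f + 1"
    by (metis card_Un_disjoint card_lessThan finite_Un finite_lessThan)
  hence cG: "f + 1 \<le> card Gd" using bad unfolding Bd_def by linarith
  have small: "card {i. i < 2 * f + 1 \<and> g i = Some m} \<le> f" if "M \<noteq> Some m" for m
  proof -
    have "{i. i < 2 * f + 1 \<and> g i = Some m} \<subseteq> Bd" using eq that by (auto simp: Bd_def)
    hence "card {i. i < 2 * f + 1 \<and> g i = Some m} \<le> card Bd"
      by (intro card_mono) (auto simp: Bd_def)
    thus ?thesis using bad by (simp add: Bd_def)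
  qed
  show ?thesis
  proof (cases M)
    case None
    hence "\<not> (\<exists>m. f + 1 \<le> card {i. i < 2 * f + 1 \<and> g i = Some m})"
      using small by (metis not_less_eq_eq option.distinct(1) Suc_eq_plus1)
    thus ?thesis using None by (simp add: vote_def)
  next
    case (Some m)
    have "Gd \<subseteq> {i. i < 2 * f + 1 \<and> g i = Some m}" using eq Some by (auto simp: Gd_def)
    hence big: "f + 1 \<le> card {i. i < 2 * f + 1 \<and> g i = Some m}"
      using cG card_mono[of "{i. i < 2 * f + 1 \<and> g i = Some m}" Gd] by fastforce
    have "(THE m. f + 1 \<le> card {i. i < 2 * f + 1 \<and> g i = Some m}) = m"
    proof (rule the_equality)
      fix m' assume "f + 1 \<le> card {i. i < 2 * f + 1 \<and> g i = Some m'}"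
      thus "m' = m" using small[of m'] Some by fastforce
    qed (rule big)
    thus ?thesis using big Some by (auto simp: vote_def)
  qed
qed

lemma sim_good:
  assumes dg: "digraph V E"
    and good: "\<forall>v \<in> V. card {i. i < 2 * f + 1 \<and> X (v, i)} \<le> f"
  shows "strong_sim f V E A {x. X x} adv inp"
  unfolding strong_sim_def
proof
  fix r show "\<forall>x\<in>reinf_nodes V f - {x. X x}. rexec f E A {x. X x} adv inp r x = exec E A inp r (fst x)"
  proof (induction r)
    case 0 thus ?case by simp
  next
    case (Suc r)
    show ?case
    proof
      fix y assume y: "y \<in> reinf_nodes V f - {x. X x}"
      have "(\<lambda>w. if (w, fst y) \<in> E then
             vote f (\<lambda>i. if (w, i) \<in> {x. X x} then adv r (w, i) y
                         else alg_send A w (rexec f E A {x. X x} adv inp r (w, i)) (fst y))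
           else None) = (\<lambda>w. if (w, fst y) \<in> E then alg_send A w (exec E A inp r w) (fst y) else None)"
      proof
        fix w show "(if (w, fst y) \<in> E then
             vote f (\<lambda>i. if (w, i) \<in> {x. X x} then adv r (w, i) y
                         else alg_send A w (rexec f E A {x. X x} adv inp r (w, i)) (fst y))
           else None) = (if (w, fst y) \<in> E then alg_send A w (exec E A inp r w) (fst y) else None)"
        proof (cases "(w, fst y) \<in> E")
          case True
          hence wV: "w \<in> V" using dg by (auto simp: digraph_def)
          have "vote f (\<lambda>i. if (w, i) \<in> {x. X x} then adv r (w, i) y
                         else alg_send A w (rexec f E A {x. X x} adv inp r (w, i)) (fst y))
                = alg_send A w (exec E A inp r w) (fst y)"
          proof (rule vote_correct[where good = "\<lambda>i. \<not> X (w, i)"])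
            show "card {i. i < 2 * f + 1 \<and> \<not> \<not> X (w, i)} \<le> f" using good wV by simp
          next
            fix i assume "i < 2 * f + 1" "\<not> X (w, i)"
            hence "(w, i) \<in> reinf_nodes V f - {x. X x}" using wV by (auto simp: reinf_nodes_def)
            thus "(if (w, i) \<in> {x. X x} then adv r (w, i) y
                         else alg_send A w (rexec f E A {x. X x} adv inp r (w, i)) (fst y))
                = alg_send A w (exec E A inp r w) (fst y)"
              using Suc by auto
          qed
          thus ?thesis using True by simp
        qed simp
      qed
      moreover have "rexec f E A {x. X x} adv inp r y = exec E A inp r (fst y)" using Suc y by blast
      ultimately show "rexec f E A {x. X x} adv inp (Suc r) y = exec E A inp (Suc r) (fst y)"
        by simp
    qed
  qed
qed



lemma finite_reinf: "finite V \<Longrightarrow> finite (reinf_nodes V f)"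
  by (simp add: reinf_nodes_def)

lemma finite_set_fault_pmf:
  assumes "finite V" shows "finite (set_pmf (fault_pmf V f p))"
proof -
  let ?A = "reinf_nodes V f"
  have fin: "finite ?A" using assms by (rule finite_reinf)
  have "set_pmf (fault_pmf V f p) \<subseteq> {g. \<forall>x. x \<notin> ?A \<longrightarrow> g x = False}"
    unfolding fault_pmf_def by (rule set_Pi_pmf_subset[OF fin])
  also have "\<dots> \<subseteq> (\<lambda>S x. x \<in> S) ` Pow ?A"
  proof
    fix g assume "g \<in> {g. \<forall>x. x \<notin> ?A \<longrightarrow> g x = False}"
    hence "g = (\<lambda>x. x \<in> {x. g x})" "{x. g x} \<in> Pow ?A" by auto
    thus "g \<in> (\<lambda>S x. x \<in> S) ` Pow ?A" by blast
  qed
  finally show ?thesis using fin by (meson finite_Pow_iff finite_imageI finite_subset)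
qed

lemma prob_all_true:
  assumes "finite V" "S \<subseteq> reinf_nodes V f" "0 \<le> p" "p \<le> 1"
  shows "measure_pmf.prob (fault_pmf V f p) {X. \<forall>x\<in>S. X x} = p ^ card S"
proof -
  let ?A = "reinf_nodes V f"
  have fin: "finite ?A" using assms by (simp add: finite_reinf)
  define B where "B = (\<lambda>x. if x \<in> S then {True} else (UNIV :: bool set))"
  have "{X. \<forall>x\<in>S. X x} = Pi ?A B" using assms(2) by (auto simp: B_def Pi_def)
  hence "measure_pmf.prob (fault_pmf V f p) {X. \<forall>x\<in>S. X x}
      = (\<Prod>x\<in>?A. measure_pmf.prob (bernoulli_pmf p) (B x))"
    unfolding fault_pmf_def using fin by (simp add: measure_Pi_pmf_Pi)
  also have "\<dots> = (\<Prod>x\<in>?A. if x \<in> S then p else 1)"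
    using assms by (intro prod.cong) (auto simp: B_def measure_pmf_single)
  also have "\<dots> = p ^ card S"
    using fin assms(2) by (simp add: prod.If_cases Int_absorb1)
  finally show ?thesis .
qed

lemma second_moment:
  fixes M :: "'a pmf" and Ev :: "'b \<Rightarrow> 'a set"
  assumes finM: "finite (set_pmf M)" and finW: "finite W"
    and mu: "\<mu> = (\<Sum>u\<in>W. measure_pmf.prob M (Ev u))" and mupos: "\<mu> > 0"
    and B: "(\<Sum>u\<in>W. \<Sum>u'\<in>W. measure_pmf.prob M (Ev u \<inter> Ev u')) \<le> B"
  shows "measure_pmf.prob M {X. \<forall>u\<in>W. X \<notin> Ev u} \<le> (B - \<mu>^2) / \<mu>^2"
proof -
  define N where "N = (\<lambda>X. \<Sum>u\<in>W. indicator (Ev u) X :: real)"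
  have int: "integrable M h" for h :: "'a \<Rightarrow> real" by (rule integrable_measure_pmf_finite[OF finM])
  have EN: "measure_pmf.expectation M N = \<mu>"
    unfolding N_def mu using int by (subst Bochner_Integration.integral_sum) auto
  have sq: "(N X)^2 = (\<Sum>u\<in>W. \<Sum>u'\<in>W. indicator (Ev u \<inter> Ev u') X)" for X
    unfolding N_def power2_eq_square sum_product by (simp add: indicator_inter_arith)
  have EN2: "measure_pmf.expectation M (\<lambda>X. (N X)^2)
       = (\<Sum>u\<in>W. \<Sum>u'\<in>W. measure_pmf.prob M (Ev u \<inter> Ev u'))"
    unfolding sq using int
    by (simp add: Bochner_Integration.integral_sum)
  have var: "measure_pmf.variance M N \<le> B - \<mu>^2"
    using measure_pmf.variance_eq[of M N] int EN EN2 B by simp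
  have "measure_pmf.prob M {X. \<forall>u\<in>W. X \<notin> Ev u}
      \<le> measure_pmf.prob M {X \<in> space (measure_pmf M). \<bar>N X - measure_pmf.expectation M N\<bar> \<ge> \<mu>}"
  proof (rule measure_pmf.finite_measure_mono)
    show "{X. \<forall>u\<in>W. X \<notin> Ev u} \<subseteq> {X \<in> space (measure_pmf M). \<bar>N X - measure_pmf.expectation M N\<bar> \<ge> \<mu>}"
      using EN mupos by (auto simp: N_def indicator_def)
  qed simp
  also have "\<dots> \<le> measure_pmf.variance M N / \<mu>^2"
    by (rule measure_pmf.Chebyshev_inequality) (auto simp: int mupos)
  also have "\<dots> \<le> (B - \<mu>^2) / \<mu>^2"
    using var by (simp add: divide_right_mono)
  finally show ?thesis .
qed



lemma prob_bad_le:
  fixes V :: "'v set"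
  assumes finV: "finite V" and p: "0 \<le> p" "p \<le> 1"
  shows "measure_pmf.prob (fault_pmf V f p) {X. \<not> (\<forall>v\<in>V. card {i. i < 2 * f + 1 \<and> X (v, i)} \<le> f)}
         \<le> real (card V) * real ((2 * f + 1) choose (f + 1)) * p ^ (f + 1)"
proof -
  define K where "K = {S. S \<subseteq> {..<2 * f + 1} \<and> card S = f + 1}"
  define Ev :: "'v \<times> nat set \<Rightarrow> ('v \<times> nat \<Rightarrow> bool) set" where "Ev = (\<lambda>(v, S). {X. \<forall>x\<in>{v} \<times> S. X x})"
  have finK: "finite K" unfolding K_def by (rule finite_subset[of _ "Pow {..<2*f+1}"]) auto
  have cK: "card K = (2 * f + 1) choose (f + 1)" unfolding K_def by (simp add: n_subsets)
  have sub: "{X. \<not> (\<forall>v\<in>V. card {i. i < 2 * f + 1 \<and> X (v, i)} \<le> f)} \<subseteq> (\<Union>i\<in>V \<times> K. Ev i)"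
  proof
    fix X assume "X \<in> {X. \<not> (\<forall>v\<in>V. card {i. i < 2 * f + 1 \<and> X (v, i)} \<le> f)}"
    then obtain v where v: "v \<in> V" "f + 1 \<le> card {i. i < 2 * f + 1 \<and> X (v, i)}" by force
    then obtain T where T: "T \<subseteq> {i. i < 2 * f + 1 \<and> X (v, i)}" "card T = f + 1"
      by (meson obtain_subset_with_card_n)
    hence "T \<in> K" "X \<in> Ev (v, T)" by (auto simp: K_def Ev_def)
    thus "X \<in> (\<Union>i\<in>V \<times> K. Ev i)" using v by blast
  qed
  have "measure_pmf.prob (fault_pmf V f p) {X. \<not> (\<forall>v\<in>V. card {i. i < 2 * f + 1 \<and> X (v, i)} \<le> f)}
      \<le> measure_pmf.prob (fault_pmf V f p) (\<Union>i\<in>V \<times> K. Ev i)"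
    by (rule measure_pmf.finite_measure_mono[OF sub]) simp
  also have "\<dots> \<le> (\<Sum>i\<in>V \<times> K. measure_pmf.prob (fault_pmf V f p) (Ev i))"
    by (rule measure_pmf.finite_measure_subadditive_finite) (use finV finK in auto)
  also have "\<dots> = (\<Sum>i\<in>V \<times> K. p ^ (f + 1))"
  proof (rule sum.cong[OF refl])
    fix i assume i: "i \<in> V \<times> K"
    obtain v S where vS: "i = (v, S)" by fastforce
    have s: "{v} \<times> S \<subseteq> reinf_nodes V f" and c: "card ({v} \<times> S) = f + 1"
      using i vS by (auto simp: K_def reinf_nodes_def card_cartesian_product_singleton)
    have "Ev i = {X. \<forall>x\<in>{v} \<times> S. X x}" by (simp add: Ev_def vS)
    also have "measure_pmf.prob (fault_pmf V f p) \<dots> = p ^ card ({v} \<times> S)"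
      by (rule prob_all_true[OF finV s p])
    finally show "measure_pmf.prob (fault_pmf V f p) (Ev i) = p ^ (f + 1)" using c by simp
  qed
  also have "\<dots> = real (card V) * real ((2 * f + 1) choose (f + 1)) * p ^ (f + 1)"
    by (simp add: card_cartesian_product cK)
  finally show ?thesis .
qed



definition Ab :: "('v \<times> 'v) set \<Rightarrow> ('v, nat, unit, unit) alg" where
  "Ab E = \<lparr>alg_init = (\<lambda>v. 0), alg_send = (\<lambda>v s w. Some ()),
           alg_trans = (\<lambda>v s i g. if (\<forall>u. (u, v) \<in> E \<longrightarrow> g u \<noteq> None) then 0 else 1)\<rparr>"

definition wfn :: "('v \<times> 'v) set \<Rightarrow> 'v \<Rightarrow> 'v" where
  "wfn E u = (SOME w. (u, w) \<in> E)"

definition Evb :: "nat \<Rightarrow> ('v \<times> 'v) set \<Rightarrow> 'v \<Rightarrow> ('v \<times> nat \<Rightarrow> bool) set" where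
  "Evb f E u = {X. (\<forall>i<f+1. X (u, i)) \<and> \<not> X (wfn E u, 0)}"

lemma Ab_send[simp]: "alg_send (Ab E) = (\<lambda>v s w. Some ())" by (simp add: Ab_def)
lemma Ab_trans[simp]: "alg_trans (Ab E) = (\<lambda>v s i g. if (\<forall>u. (u, v) \<in> E \<longrightarrow> g u \<noteq> None) then 0 else 1)"
  by (simp add: Ab_def)
lemma Ab_init[simp]: "alg_init (Ab E) = (\<lambda>v. 0)" by (simp add: Ab_def)

lemma vote_none:
  assumes "\<And>i. i < f + 1 \<Longrightarrow> X i"
  shows "vote f (\<lambda>i. if X i then None else Some ()) = None"
proof -
  have "card {i. i < 2 * f + 1 \<and> (if X i then None else Some ()) = Some m} \<le> f" for m
  proof -
    have "{i. i < 2 * f + 1 \<and> (if X i then None else Some ()) = Some m} \<subseteq> {f+1..<2*f+1}"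
      using assms by (auto split: if_splits) (meson not_le)
    from card_mono[OF _ this] show ?thesis by simp
  qed
  hence "\<not> (\<exists>m. f + 1 \<le> card {i. i < 2 * f + 1 \<and> (if X i then None else Some ()) = Some m})"
    by (metis not_less_eq_eq Suc_eq_plus1)
  thus ?thesis by (simp add: vote_def)
qed

lemma not_sim:
  assumes dg: "digraph V E" and u: "u \<in> V" "\<exists>w. (u, w) \<in> E" and X: "X \<in> Evb f E u"
  shows "\<not> strong_sim f V E (Ab E) {x. X x} (\<lambda>_ _ _. None) inp"
proof
  assume sim: "strong_sim f V E (Ab E) {x. X x} (\<lambda>_ _ _. None) inp"
  define w where "w = wfn E u"
  have uw: "(u, w) \<in> E" unfolding w_def wfn_def by (rule someI_ex[OF u(2)])
  hence wV: "w \<in> V" using dg by (auto simp: digraph_def)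
  have x: "(w, 0) \<in> reinf_nodes V f - {x. X x}"
    using X wV by (auto simp: Evb_def reinf_nodes_def w_def)
  have "exec E (Ab E) inp (Suc 0) w = 0" by simp
  moreover have "rexec f E (Ab E) {x. X x} (\<lambda>_ _ _. None) inp (Suc 0) (w, 0) = 1"
  proof -
    have "vote f (\<lambda>i. if (u, i) \<in> {x. X x} then None
                  else alg_send (Ab E) u (rexec f E (Ab E) {x. X x} (\<lambda>_ _ _. None) inp 0 (u, i)) w) = None"
      using vote_none[of f "\<lambda>i. X (u, i)"] X apply (simp add: Evb_def)
      apply (simp only: Ab_send)
      done
    hence "\<not> (\<forall>u'. (u', w) \<in> E \<longrightarrow>
        (if (u', w) \<in> E then vote f (\<lambda>i. if (u', i) \<in> {x. X x} then None
                  else alg_send (Ab E) u' (rexec f E (Ab E) {x. X x} (\<lambda>_ _ _. None) inp 0 (u', i)) w)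
         else None) \<noteq> None)"
      using uw by auto
    thus ?thesis by (simp only: rexec.simps Ab_trans fst_conv if_False)
  qed
  moreover have "rexec f E (Ab E) {x. X x} (\<lambda>_ _ _. None) inp (Suc 0) (w, 0) = exec E (Ab E) inp (Suc 0) w"
    using bspec[OF spec[OF sim[unfolded strong_sim_def], of "Suc 0"] x] by simp
  ultimately show False by simp
qed



lemma wf_props:
  assumes dg: "digraph V E" and u: "\<exists>w. (u, w) \<in> E"
  shows "(u, wfn E u) \<in> E" "wfn E u \<in> V" "wfn E u \<noteq> u" "u \<in> V"
proof -
  show e: "(u, wfn E u) \<in> E" unfolding wfn_def by (rule someI_ex[OF u])
  thus "wfn E u \<in> V" "u \<in> V" using dg by (auto simp: digraph_def)
  show "wfn E u \<noteq> u" using e dg by (auto simp: digraph_def)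
qed

lemma prob_b:
  fixes V :: "'v set" and E and f :: nat
  assumes dg: "digraph V E" and p: "0 < p" "p < 1"
    and W: "W = {v\<in>V. \<exists>w. (v, w) \<in> E}" and m: "card W > 0"
  defines "a \<equiv> p ^ (f + 1)"
  defines "\<mu> \<equiv> real (card W) * (a - a * p)"
  shows "measure_pmf.prob (fault_pmf V f p) {X. \<forall>u\<in>W. X \<notin> Evb f E u}
           \<le> (real (card W) * a + (real (card W))^2 * a^2 - \<mu>^2) / \<mu>^2"
proof -
  have finV: "finite V" using dg by (simp add: digraph_def)
  have finW: "finite W" using finV W by simp
  let ?M = "fault_pmf V f p"
  define Au where "Au = (\<lambda>u. {X::'v \<times> nat \<Rightarrow> bool. \<forall>x\<in>{u} \<times> {..<f+1}. X x})"
  have cAu: "card ({u} \<times> {..<f+1}) = f + 1" for u :: 'v by (simp add: card_cartesian_product_singleton)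
  have PA: "measure_pmf.prob ?M (Au u) = a" if "u \<in> W" for u
  proof -
    have "{u} \<times> {..<f+1} \<subseteq> reinf_nodes V f" using that W by (auto simp: reinf_nodes_def)
    from prob_all_true[OF finV this] p show ?thesis by (simp add: Au_def cAu a_def)
  qed
  have PE: "measure_pmf.prob ?M (Evb f E u) = a - a * p" if "u \<in> W" for u
  proof -
    note wp = wf_props[OF dg, of u]
    have u: "\<exists>w. (u, w) \<in> E" "u \<in> V" using that W by auto
    define S where "S = {u} \<times> {..<f+1} \<union> {(wfn E u, 0)}"
    have S1: "S \<subseteq> reinf_nodes V f" using wp u by (auto simp: S_def reinf_nodes_def)
    have cS: "card S = f + 2" unfolding S_def using wp(3)[OF u(1)] by (simp add: cAu)
    have "Evb f E u = Au u - {X. \<forall>x\<in>S. X x}"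
      by (auto simp: Evb_def Au_def S_def)
    also have "measure_pmf.prob ?M \<dots> = measure_pmf.prob ?M (Au u) - measure_pmf.prob ?M {X. \<forall>x\<in>S. X x}"
      by (rule measure_pmf.finite_measure_Diff) (auto simp: Au_def S_def)
    also have "\<dots> = a - a * p"
      using PA[OF that] prob_all_true[OF finV S1] p by (simp add: cS a_def)
    finally show ?thesis .
  qed
  have PEE: "measure_pmf.prob ?M (Evb f E u \<inter> Evb f E u') \<le> (if u = u' then a else 0) + a^2"
    if "u \<in> W" "u' \<in> W" for u u'
  proof (cases "u = u'")
    case True
    have "0 \<le> a * p" using p by (simp add: a_def)
    moreover have "0 \<le> a^2" by simp
    ultimately have "- (a * p) \<le> a^2" by linarith
    thus ?thesis using PE[OF that(1)] True by simp
  next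
    case False
    define S where "S = {u, u'} \<times> {..<f+1}"
    have S1: "S \<subseteq> reinf_nodes V f" using that W by (auto simp: S_def reinf_nodes_def)
    have cS: "card S = 2 * (f + 1)" unfolding S_def using False by (simp add: card_cartesian_product)
    have "measure_pmf.prob ?M (Evb f E u \<inter> Evb f E u') \<le> measure_pmf.prob ?M {X. \<forall>x\<in>S. X x}"
      by (rule measure_pmf.finite_measure_mono) (auto simp: Evb_def S_def)
    also have "\<dots> = a^2"
      using prob_all_true[OF finV S1, of p] p unfolding cS a_def by (simp add: power_mult[symmetric] power_mult_distrib power2_eq_square mult_ac power_add[symmetric] mult_2_right)
    finally show ?thesis using False by simp
  qed
  have apos: "a > 0" using p by (simp add: a_def)
  have mupos: "\<mu> > 0" unfolding \<mu>_def using m apos p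
    by (simp add: mult_pos_pos)
  have sumE: "\<mu> = (\<Sum>u\<in>W. measure_pmf.prob ?M (Evb f E u))"
    using PE by (simp add: \<mu>_def)
  have "(\<Sum>u\<in>W. \<Sum>u'\<in>W. measure_pmf.prob ?M (Evb f E u \<inter> Evb f E u'))
        \<le> (\<Sum>u\<in>W. \<Sum>u'\<in>W. (if u = u' then a else 0) + a^2)"
    by (intro sum_mono PEE)
  also have "\<dots> = real (card W) * a + (real (card W))^2 * a^2"
    using finW by (simp add: sum.distrib power2_eq_square algebra_simps)
  finally have B: "(\<Sum>u\<in>W. \<Sum>u'\<in>W. measure_pmf.prob ?M (Evb f E u \<inter> Evb f E u'))
        \<le> real (card W) * a + (real (card W))^2 * a^2" .
  show ?thesis
    by (rule second_moment[OF finite_set_fault_pmf[OF finV] finW sumE mupos B])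
qed



lemma g_pow:
  assumes "n > 0"
  shows "real n * (real n powr (- 1 / real (f + 1))) ^ (f + 1) = 1"
proof -
  have "(real n powr (- 1 / real (f + 1))) ^ (f + 1) = real n powr (real (f + 1) * (- 1 / real (f + 1)))"
    using assms by (subst powr_power) auto
  also have "real (f + 1) * (- 1 / real (f + 1)) = -1" by (simp add: field_simps)
  finally show ?thesis using assms by (simp add: powr_neg_one)
qed

lemma asym_a:
  fixes p :: "nat \<Rightarrow> real"
  assumes "p \<in> o(\<lambda>n. real n powr (- 1 / real (f + 1)))"
  shows "(\<lambda>n. real n * p n ^ (f + 1)) \<longlonglongrightarrow> 0"
proof -
  define g where "g = (\<lambda>n. real n powr (- 1 / real (f + 1)))"
  have r: "(\<lambda>n. p n / g n) \<longlonglongrightarrow> 0" using smalloD_tendsto[OF assms] by (simp add: g_def)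
  have "(\<lambda>n. (p n / g n) ^ (f + 1)) \<longlonglongrightarrow> 0 ^ (f + 1)" by (intro tendsto_intros r)
  hence lim: "(\<lambda>n. (p n / g n) ^ (f + 1)) \<longlonglongrightarrow> 0" by simp
  have "eventually (\<lambda>n. (p n / g n) ^ (f + 1) = real n * p n ^ (f + 1)) sequentially"
    using eventually_gt_at_top[of "0::nat"]
  proof eventually_elim
    case (elim n)
    have gp: "g n > 0" using elim by (simp add: g_def)
    have "real n * g n ^ (f + 1) = 1" using g_pow[OF elim] by (simp add: g_def)
    hence "real n = 1 / g n ^ (f + 1)" using gp by (simp add: field_simps)
    thus ?case by (simp add: power_divide)
  qed
  from tendsto_cong[OF this] lim show ?thesis by simp
qed

lemma asym_b:
  fixes p :: "nat \<Rightarrow> real" and m :: "nat \<Rightarrow> nat"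
  assumes om: "p \<in> \<omega>(\<lambda>n. real n powr (- 1 / real (f + 1)))"
    and Om: "(\<lambda>n. real (m n)) \<in> \<Omega>(\<lambda>n. real n)"
    and pnn: "\<forall>n. 0 \<le> p n"
  shows "(\<lambda>n. 1 / (real (m n) * p n ^ (f + 1))) \<longlonglongrightarrow> 0"
    and "eventually (\<lambda>n. p n > 0 \<and> m n > 0) sequentially"
proof -
  define g where "g = (\<lambda>n. real n powr (- 1 / real (f + 1)))"
  have "g \<in> o(p)" using om by (simp add: smallomega_iff_smallo g_def)
  hence s: "(\<lambda>n. g n / p n) \<longlonglongrightarrow> 0" by (rule smalloD_tendsto)
  have "(\<lambda>n. (g n / p n) ^ (f + 1)) \<longlonglongrightarrow> 0 ^ (f + 1)" by (intro tendsto_intros s)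
  hence lim: "(\<lambda>n. (g n / p n) ^ (f + 1)) \<longlonglongrightarrow> 0" by simp
  obtain c where c: "c > 0" "eventually (\<lambda>n. c * norm (real n) \<le> norm (real (m n))) sequentially"
    using Om by (rule landau_omega.bigE)
  have ev1: "eventually (\<lambda>n. 1 * norm (g n) \<le> norm (p n)) sequentially"
    using landau_omega.smallD[OF om, of 1] by (simp add: g_def)
  have ev: "eventually (\<lambda>n. p n > 0 \<and> m n > 0 \<and> c * real n \<le> real (m n) \<and> g n > 0) sequentially"
    using ev1 c(2) eventually_gt_at_top[of "0::nat"]
  proof eventually_elim
    case (elim n)
    have gp: "g n > 0" using elim by (simp add: g_def)
    hence "p n > 0" using elim pnn by auto
    moreover have "c * real n \<le> real (m n)" using elim by simp
    moreover hence "m n > 0" using c(1) elim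
      by (metis of_nat_0_less_iff mult_pos_pos order_less_le_trans)
    ultimately show ?case using gp by simp
  qed
  thus "eventually (\<lambda>n. p n > 0 \<and> m n > 0) sequentially" by (rule eventually_mono) simp
  show "(\<lambda>n. 1 / (real (m n) * p n ^ (f + 1))) \<longlonglongrightarrow> 0"
  proof (rule tendsto_sandwich[of "\<lambda>_. 0" _ _ "\<lambda>n. (g n / p n) ^ (f + 1) / c"])
    show "eventually (\<lambda>n. 0 \<le> 1 / (real (m n) * p n ^ (f + 1))) sequentially"
      using ev by (rule eventually_mono) simp
    show "eventually (\<lambda>n. 1 / (real (m n) * p n ^ (f + 1)) \<le> (g n / p n) ^ (f + 1) / c) sequentially"
      using ev eventually_gt_at_top[of "0::nat"]
    proof eventually_elim
      case (elim n)
      have "real n * g n ^ (f + 1) = 1" using g_pow[of n f] elim by (simp add: g_def)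
      hence eq: "(g n / p n) ^ (f + 1) / c = 1 / (c * real n * p n ^ (f + 1))"
        using elim c(1) by (simp add: power_divide field_simps)
      have "c * real n * p n ^ (f + 1) \<le> real (m n) * p n ^ (f + 1)"
        using elim by (intro mult_right_mono) auto
      moreover have "0 < c * real n * p n ^ (f + 1)" using elim c(1) by simp
      ultimately show ?case unfolding eq by (intro divide_left_mono) auto
    qed
    show "(\<lambda>n. (g n / p n) ^ (f + 1) / c) \<longlonglongrightarrow> 0"
      using tendsto_divide_zero[OF lim, of c] .
  qed simp
qed

lemma alg_id0:
  fixes z r :: real assumes "z > 0" "r > 0"
  shows "(z + z^2) / (z^2 * r) = (1 / z + 1) / r"
  using assms by (simp add: field_simps power2_eq_square)
lemma alg_id:
  fixes x y q :: real
  assumes "x > 0" "y > 0" "q < 1"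
  shows "(1 / (x * y) + 1) / (1 - q)^2 - 1 = (x * y + x^2 * y^2 - (x * (y - y * q))^2) / (x * (y - y * q))^2"
proof -
  have e: "x * (y - y * q) = x * y * (1 - q)" by (simp add: algebra_simps)
  have nz: "x * y * (1 - q) \<noteq> 0" using assms by simp
  have "(x * y + x^2 * y^2 - (x * y * (1 - q))^2) / (x * y * (1 - q))^2
      = (x * y + x^2 * y^2) / (x * y * (1 - q))^2 - 1"
    using nz by (simp add: diff_divide_distrib)
  also have "(x * y + x^2 * y^2) / (x * y * (1 - q))^2 = ((x*y) + (x*y)^2) / ((x * y)^2 * (1 - q)^2)"
    by (simp add: power_mult_distrib)
  also have "\<dots> = (1 / (x * y) + 1) / (1 - q)^2"
    by (rule alg_id0) (use assms in auto)
  finally show ?thesis unfolding e by simp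
qed


theorem theorem2:
  fixes f :: nat and V :: "nat \<Rightarrow> 'v set" and E :: "nat \<Rightarrow> ('v \<times> 'v) set"
    and p :: "nat \<Rightarrow> real"
  assumes graphs: "\<forall>n. digraph (V n) (E n) \<and> card (V n) = n"
    and p_range: "\<forall>n. 0 \<le> p n \<and> p n \<le> 1"
    and p_small: "p \<in> o(\<lambda>n. 1)"
  shows
   "(p \<in> o(\<lambda>n. real n powr (- 1 / real (f + 1))) \<longrightarrow>
       ((\<lambda>n. measure_pmf.prob (fault_pmf (V n) f (p n))
               {X. \<forall>v \<in> V n. card {i. i < 2 * f + 1 \<and> X (v, i)} \<le> f}) \<longlonglongrightarrow> 1)
     \<and> (\<forall>A :: nat \<Rightarrow> ('v, 's, 'm, 'i) alg.
          (\<lambda>n. measure_pmf.prob (fault_pmf (V n) f (p n))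
               {X. \<forall>adv inp. strong_sim f (V n) (E n) (A n) {x. X x} adv inp}) \<longlonglongrightarrow> 1))
  \<and> ((\<lambda>n. real (card {v \<in> V n. \<exists>w. (v, w) \<in> E n})) \<in> \<Omega>(\<lambda>n. real n)
       \<and> p \<in> \<omega>(\<lambda>n. real n powr (- 1 / real (f + 1))) \<longrightarrow>
       ((\<lambda>n. measure_pmf.prob (fault_pmf (V n) f (p n))
               {X. \<exists>v \<in> V n. (\<exists>w. (v, w) \<in> E n) \<and> f < card {i. i < 2 * f + 1 \<and> X (v, i)}})
          \<longlonglongrightarrow> 1)
     \<and> (\<exists>(A :: nat \<Rightarrow> ('v, nat, unit, unit) alg) (inp :: nat \<Rightarrow> nat \<Rightarrow> 'v \<Rightarrow> unit).
          (\<lambda>n. measure_pmf.prob (fault_pmf (V n) f (p n))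
               {X. strong_sim f (V n) (E n) (A n) {x. X x} (\<lambda>_ _ _. None) (inp n)}) \<longlonglongrightarrow> 0))"
  proof -
  define g where "g = (\<lambda>n. real n powr (- 1 / real (f + 1)))"
  have dg: "digraph (V n) (E n)" for n using graphs by blast
  have cV: "card (V n) = n" for n using graphs by blast
  have finV: "finite (V n)" for n using dg by (simp add: digraph_def)
  have pnn: "\<forall>n. 0 \<le> p n" using p_range by blast
  have p0: "p \<longlonglongrightarrow> 0" using smalloD_tendsto[OF p_small] by simp
  have partA: "p \<in> o(\<lambda>n. real n powr (- 1 / real (f + 1))) \<longrightarrow>
       ((\<lambda>n. measure_pmf.prob (fault_pmf (V n) f (p n))
               {X. \<forall>v \<in> V n. card {i. i < 2 * f + 1 \<and> X (v, i)} \<le> f}) \<longlonglongrightarrow> 1)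
     \<and> (\<forall>A :: nat \<Rightarrow> ('v, 's, 'm, 'i) alg.
          (\<lambda>n. measure_pmf.prob (fault_pmf (V n) f (p n))
               {X. \<forall>adv inp. strong_sim f (V n) (E n) (A n) {x. X x} adv inp}) \<longlonglongrightarrow> 1)"
  proof
    assume pa: "p \<in> o(\<lambda>n. real n powr (- 1 / real (f + 1)))"
    define K where "K = real ((2 * f + 1) choose (f + 1))"
    define G where "G = (\<lambda>n. {X. \<forall>v \<in> V n. card {i. i < 2 * f + 1 \<and> X (v, i)} \<le> f})"
    have h: "(\<lambda>n. real n * p n ^ (f + 1)) \<longlonglongrightarrow> 0" by (rule asym_a[OF pa])
    have low: "(\<lambda>n. 1 - K * (real n * p n ^ (f + 1))) \<longlonglongrightarrow> 1"
      using tendsto_diff[OF tendsto_const tendsto_mult[OF tendsto_const h], of 1 K] by simp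
    have PG: "1 - K * (real n * p n ^ (f + 1)) \<le> measure_pmf.prob (fault_pmf (V n) f (p n)) (G n)" for n
    proof -
      have eqG: "G n = space (measure_pmf (fault_pmf (V n) f (p n)))
                 - {X. \<not> (\<forall>v\<in>V n. card {i. i < 2 * f + 1 \<and> X (v, i)} \<le> f)}"
        by (auto simp: G_def)
      have "measure_pmf.prob (fault_pmf (V n) f (p n)) (G n)
          = 1 - measure_pmf.prob (fault_pmf (V n) f (p n)) {X. \<not> (\<forall>v\<in>V n. card {i. i < 2 * f + 1 \<and> X (v, i)} \<le> f)}"
        unfolding eqG by (rule measure_pmf.prob_compl) simp
      moreover have "measure_pmf.prob (fault_pmf (V n) f (p n)) {X. \<not> (\<forall>v\<in>V n. card {i. i < 2 * f + 1 \<and> X (v, i)} \<le> f)}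
          \<le> K * (real n * p n ^ (f + 1))"
        using prob_bad_le[OF finV[of n], of "p n" f] p_range cV[of n] by (simp add: K_def mult_ac)
      ultimately show ?thesis by simp
    qed
    have limG: "(\<lambda>n. measure_pmf.prob (fault_pmf (V n) f (p n)) (G n)) \<longlonglongrightarrow> 1"
      by (rule tendsto_sandwich[OF always_eventually always_eventually low tendsto_const])
         (use PG in auto)
    show "((\<lambda>n. measure_pmf.prob (fault_pmf (V n) f (p n))
               {X. \<forall>v \<in> V n. card {i. i < 2 * f + 1 \<and> X (v, i)} \<le> f}) \<longlonglongrightarrow> 1)
     \<and> (\<forall>A :: nat \<Rightarrow> ('v, 's, 'm, 'i) alg.
          (\<lambda>n. measure_pmf.prob (fault_pmf (V n) f (p n))
               {X. \<forall>adv inp. strong_sim f (V n) (E n) (A n) {x. X x} adv inp}) \<longlonglongrightarrow> 1)"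
    proof (intro conjI allI)
      show "(\<lambda>n. measure_pmf.prob (fault_pmf (V n) f (p n))
               {X. \<forall>v \<in> V n. card {i. i < 2 * f + 1 \<and> X (v, i)} \<le> f}) \<longlonglongrightarrow> 1"
        using limG by (simp add: G_def)
    next
      fix A :: "nat \<Rightarrow> ('v, 's, 'm, 'i) alg"
      have "measure_pmf.prob (fault_pmf (V n) f (p n)) (G n)
          \<le> measure_pmf.prob (fault_pmf (V n) f (p n))
               {X. \<forall>adv inp. strong_sim f (V n) (E n) (A n) {x. X x} adv inp}" for n
        by (rule measure_pmf.finite_measure_mono) (auto simp: G_def intro: sim_good[OF dg])
      thus "(\<lambda>n. measure_pmf.prob (fault_pmf (V n) f (p n))
               {X. \<forall>adv inp. strong_sim f (V n) (E n) (A n) {x. X x} adv inp}) \<longlonglongrightarrow> 1"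
        by (intro tendsto_sandwich[OF always_eventually always_eventually limG tendsto_const]) auto
    qed
  qed
  have partB: "(\<lambda>n. real (card {v \<in> V n. \<exists>w. (v, w) \<in> E n})) \<in> \<Omega>(\<lambda>n. real n)
       \<and> p \<in> \<omega>(\<lambda>n. real n powr (- 1 / real (f + 1))) \<longrightarrow>
       ((\<lambda>n. measure_pmf.prob (fault_pmf (V n) f (p n))
               {X. \<exists>v \<in> V n. (\<exists>w. (v, w) \<in> E n) \<and> f < card {i. i < 2 * f + 1 \<and> X (v, i)}})
          \<longlonglongrightarrow> 1)
     \<and> (\<exists>(A :: nat \<Rightarrow> ('v, nat, unit, unit) alg) (inp :: nat \<Rightarrow> nat \<Rightarrow> 'v \<Rightarrow> unit).
          (\<lambda>n. measure_pmf.prob (fault_pmf (V n) f (p n))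
               {X. strong_sim f (V n) (E n) (A n) {x. X x} (\<lambda>_ _ _. None) (inp n)}) \<longlonglongrightarrow> 0)"
  proof
    assume hyp: "(\<lambda>n. real (card {v \<in> V n. \<exists>w. (v, w) \<in> E n})) \<in> \<Omega>(\<lambda>n. real n)
       \<and> p \<in> \<omega>(\<lambda>n. real n powr (- 1 / real (f + 1)))"
    define W where "W = (\<lambda>n. {v \<in> V n. \<exists>w. (v, w) \<in> E n})"
    define m where "m = (\<lambda>n. card (W n))"
    define a where "a = (\<lambda>n. p n ^ (f + 1))"
    define \<mu> where "\<mu> = (\<lambda>n. real (m n) * (a n - a n * p n))"
    define R where "R = (\<lambda>n. (real (m n) * a n + (real (m n))^2 * (a n)^2 - (\<mu> n)^2) / (\<mu> n)^2)"
    define NoE where "NoE = (\<lambda>n. {X. \<forall>u\<in>W n. X \<notin> Evb f (E n) u})"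
    define Q where "Q = (\<lambda>n. measure_pmf.prob (fault_pmf (V n) f (p n)) (NoE n))"
    have Om: "(\<lambda>n. real (m n)) \<in> \<Omega>(\<lambda>n. real n)" using hyp by (simp add: m_def W_def)
    have om: "p \<in> \<omega>(\<lambda>n. real n powr (- 1 / real (f + 1)))" using hyp by simp
    have t: "(\<lambda>n. 1 / (real (m n) * a n)) \<longlonglongrightarrow> 0"
      using asym_b(1)[OF om Om pnn] by (simp add: a_def)
    have evpm: "eventually (\<lambda>n. p n > 0 \<and> m n > 0) sequentially"
      using asym_b(2)[OF om Om pnn] .
    have evp1: "eventually (\<lambda>n. p n < 1) sequentially"
      using order_tendstoD(2)[OF p0, of 1] by simp
    have evR: "eventually (\<lambda>n. (1 / (real (m n) * a n) + 1) / (1 - p n)^2 - 1 = R n) sequentially"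
      using evpm evp1
    proof eventually_elim
      case (elim n)
      have "a n > 0" using elim by (simp add: a_def)
      moreover have "1 - p n \<noteq> 0" using elim by simp
      ultimately show ?case unfolding R_def \<mu>_def
        by (intro alg_id) (use elim in auto)
    qed
    have "(\<lambda>n. (1 / (real (m n) * a n) + 1) / (1 - p n)^2 - 1) \<longlonglongrightarrow> (0 + 1) / (1 - 0)^2 - 1"
      by (intro tendsto_intros t p0) simp
    hence limR: "R \<longlonglongrightarrow> 0" using tendsto_cong[OF evR] by simp
    have evQ: "eventually (\<lambda>n. Q n \<le> R n) sequentially"
      using evpm evp1
    proof eventually_elim
      case (elim n)
      show ?case unfolding Q_def NoE_def R_def \<mu>_def a_def m_def
        by (rule prob_b[OF dg[of n] _ _ W_def[THEN fun_cong[of _ _ n]]]) (use elim in \<open>auto simp: m_def\<close>)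
    qed
    have limQ: "Q \<longlonglongrightarrow> 0"
      by (rule tendsto_sandwich[OF always_eventually evQ tendsto_const limR]) (simp add: Q_def)
    have bad_of: "u \<in> W n \<and> f < card {i. i < 2 * f + 1 \<and> X (u, i)}" if "u \<in> W n" "X \<in> Evb f (E n) u" for n u X
    proof -
      have "{..<f+1} \<subseteq> {i. i < 2 * f + 1 \<and> X (u, i)}" using that by (auto simp: Evb_def)
      from card_mono[OF _ this] that show ?thesis by simp
    qed
    show "((\<lambda>n. measure_pmf.prob (fault_pmf (V n) f (p n))
               {X. \<exists>v \<in> V n. (\<exists>w. (v, w) \<in> E n) \<and> f < card {i. i < 2 * f + 1 \<and> X (v, i)}})
          \<longlonglongrightarrow> 1)
     \<and> (\<exists>(A :: nat \<Rightarrow> ('v, nat, unit, unit) alg) (inp :: nat \<Rightarrow> nat \<Rightarrow> 'v \<Rightarrow> unit).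
          (\<lambda>n. measure_pmf.prob (fault_pmf (V n) f (p n))
               {X. strong_sim f (V n) (E n) (A n) {x. X x} (\<lambda>_ _ _. None) (inp n)}) \<longlonglongrightarrow> 0)"
    proof (intro conjI exI)
      have low: "1 - Q n \<le> measure_pmf.prob (fault_pmf (V n) f (p n))
               {X. \<exists>v \<in> V n. (\<exists>w. (v, w) \<in> E n) \<and> f < card {i. i < 2 * f + 1 \<and> X (v, i)}}" for n
      proof -
        have "1 - Q n = measure_pmf.prob (fault_pmf (V n) f (p n)) (space (measure_pmf (fault_pmf (V n) f (p n))) - NoE n)"
          unfolding Q_def by (rule measure_pmf.prob_compl[symmetric]) simp
        also have "\<dots> \<le> measure_pmf.prob (fault_pmf (V n) f (p n))
               {X. \<exists>v \<in> V n. (\<exists>w. (v, w) \<in> E n) \<and> f < card {i. i < 2 * f + 1 \<and> X (v, i)}}"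
        proof (rule measure_pmf.finite_measure_mono)
          show "space (measure_pmf (fault_pmf (V n) f (p n))) - NoE n \<subseteq>
               {X. \<exists>v \<in> V n. (\<exists>w. (v, w) \<in> E n) \<and> f < card {i. i < 2 * f + 1 \<and> X (v, i)}}"
          proof
            fix X assume "X \<in> space (measure_pmf (fault_pmf (V n) f (p n))) - NoE n"
            then obtain u where u: "u \<in> W n" "X \<in> Evb f (E n) u" by (auto simp: NoE_def)
            have "f < card {i. i < 2 * f + 1 \<and> X (u, i)}" using bad_of[OF u] by blast
            moreover have "u \<in> V n" "\<exists>w. (u, w) \<in> E n" using u(1) by (auto simp: W_def)
            ultimately show "X \<in> {X. \<exists>v \<in> V n. (\<exists>w. (v, w) \<in> E n) \<and> f < card {i. i < 2 * f + 1 \<and> X (v, i)}}"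
              by blast
          qed
        qed simp
        finally show ?thesis .
      qed
      have "(\<lambda>n. 1 - Q n) \<longlonglongrightarrow> 1 - 0" by (intro tendsto_intros limQ)
      hence l1: "(\<lambda>n. 1 - Q n) \<longlonglongrightarrow> 1" by simp
      show "(\<lambda>n. measure_pmf.prob (fault_pmf (V n) f (p n))
               {X. \<exists>v \<in> V n. (\<exists>w. (v, w) \<in> E n) \<and> f < card {i. i < 2 * f + 1 \<and> X (v, i)}})
          \<longlonglongrightarrow> 1"
        by (rule tendsto_sandwich[OF always_eventually always_eventually l1 tendsto_const]) (use low in auto)
    next
      have up: "measure_pmf.prob (fault_pmf (V n) f (p n))
               {X. strong_sim f (V n) (E n) (Ab (E n)) {x. X x} (\<lambda>_ _ _. None) (\<lambda>_ _. ())} \<le> Q n" for n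
        unfolding Q_def
      proof (rule measure_pmf.finite_measure_mono)
        show "{X. strong_sim f (V n) (E n) (Ab (E n)) {x. X x} (\<lambda>_ _ _. None) (\<lambda>_ _. ())} \<subseteq> NoE n"
        proof
          fix X assume "X \<in> {X. strong_sim f (V n) (E n) (Ab (E n)) {x. X x} (\<lambda>_ _ _. None) (\<lambda>_ _. ())}"
          hence sim: "strong_sim f (V n) (E n) (Ab (E n)) {x. X x} (\<lambda>_ _ _. None) (\<lambda>_ _. ())" by simp
          show "X \<in> NoE n" unfolding NoE_def
          proof (intro CollectI ballI notI)
            fix u assume u: "u \<in> W n" "X \<in> Evb f (E n) u"
            have "u \<in> V n" "\<exists>w. (u, w) \<in> E n" using u(1) by (auto simp: W_def)
            from not_sim[OF dg[of n] this u(2)] sim show False by blast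
          qed
        qed
      qed simp
      show "(\<lambda>n. measure_pmf.prob (fault_pmf (V n) f (p n))
               {X. strong_sim f (V n) (E n) (Ab (E n)) {x. X x} (\<lambda>_ _ _. None) ((\<lambda>n _ _. ()) n)}) \<longlonglongrightarrow> 0"
        by (rule tendsto_sandwich[OF always_eventually always_eventually tendsto_const limQ]) (use up in auto)
    qed
  qed
  show ?thesis by (rule conjI[OF partA partB])
qed

end
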